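(* Let $\mathcal A$ be a well-structured abstract domain with abstraction function $\alpha:\mathcal Q\to\mathcal A$. For any $R_1,R_2\subseteq\mathcal D(\mathcal H_V)$, if $\alpha_s(R_1)=\alpha_s(R_2)$ then $\alpha(R_1)=\alpha(R_2)$. Consequently $\alpha=\alpha\circ\gamma_s\circ\alpha_s$.
   Context: Fix a finite set $V$ of quantum variables, each a qubit with state space $\mathcal H_q\cong\mathbb C^2$; $\mathcal H_V=\bigotimes_{q\in V}\mathcal H_q$. $\mathcal D(\mathcal H_V)$ is the set of partial density operators on $\mathcal H_V$ (positive operators of trace at most $1$); $\lceil\rho\rceil$ denotes the support (image space) of $\rho$. The concrete domain is $\mathcal Q=2^{\mathcal D(\mathcal H_V)}$ ordered by inclusion. A pair of monotone maps $(\alpha,\gamma)$ between posets is a Galois connection if $c\le\gamma(a)\iff\alpha(c)\le a$, and a Galois embedding if moreover $\alpha\circ\gamma=\mathrm{id}$. A complete lattice $(\mathcal A,\le_{\mathcal A},\vee,\wedge,\bot,\top)$ with monotone $\alpha:\mathcal Q\to\mathcal A$, $\gamma:\mathcal A\to\mathcal Q$ is a well-structured abstract domain if (a) $(\alpha,\gamma)$ is a Galois embedding, and (b) for any family $\rho_i\in\mathcal D(\mathcal H_V)$ and reals $x_i>0$ with $\sum_i x_i\rho_i\in\mathcal D(\mathcal H_V)$, $\alpha(\sum_i x_i\rho_i)=\bigvee_i\alpha(\rho_i)$, where $\alpha(\rho)=\alpha(\{\rho\})$. The subspace domain $\mathcal S(\mathcal H_V)$ is the set of all subspaces of $\mathcal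 H_V$ ordered by inclusion, with join $P\vee Q=\mathrm{span}(P\cup Q)$ and meet $\cap$; its functions are $\gamma_s(P)=\{\rho\in\mathcal D(\mathcal H_V):\lceil\rho\rceil\subseteq P\}$ and $\alpha_s(R)=\bigvee\{\lceil\rho\rceil:\rho\in R\}$. *)

theory Defs
  imports Complex_Main
begin

text \<open>The finite set V of quantum variables is modelled by a finite type 'q.
  Each variable is a qubit, so the computational basis of H_V is indexed by
  assignments 'q \<Rightarrow> bool; vectors of H_V are functions from basis states to
  complex amplitudes, and operators on H_V are matrices in that basis.\<close>

type_synonym 'q basis = "'q \<Rightarrow> bool"
type_synonym 'q vec = "'q basis \<Rightarrow> complex"
type_synonym 'q op = "'q basis \<Rightarrow> 'q basis \<Rightarrow> complex"

definition apply_op :: "('q::finite) op \<Rightarrow> 'q vec \<Rightarrow> 'q vec" where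
  "apply_op A v = (\<lambda>i. \<Sum>j\<in>UNIV. A i j * v j)"

definition inner_vec :: "('q::finite) vec \<Rightarrow> 'q vec \<Rightarrow> complex" where
  "inner_vec u v = (\<Sum>i\<in>UNIV. cnj (u i) * v i)"

definition trace_op :: "('q::finite) op \<Rightarrow> complex" where
  "trace_op A = (\<Sum>i\<in>UNIV. A i i)"

definition positive_op :: "('q::finite) op \<Rightarrow> bool" where
  "positive_op A \<longleftrightarrow> (\<forall>v. inner_vec v (apply_op A v) \<in> \<real> \<and> Re (inner_vec v (apply_op A v)) \<ge> 0)"

definition pdo :: "('q::finite) op set" where
  "pdo = {A. positive_op A \<and> Re (trace_op A) \<le> 1}"

definition supp :: "('q::finite) op \<Rightarrow> 'q vec set" where
  "supp A = range (apply_op A)"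

definition csubspace :: "('q::finite) vec set \<Rightarrow> bool" where
  "csubspace S \<longleftrightarrow> (\<lambda>i. 0) \<in> S \<and> (\<forall>u\<in>S. \<forall>v\<in>S. (\<lambda>i. u i + v i) \<in> S) \<and> (\<forall>c::complex. \<forall>v\<in>S. (\<lambda>i. c * v i) \<in> S)"

definition subspace_Sup :: "('q::finite) vec set set \<Rightarrow> 'q vec set" where
  "subspace_Sup F = \<Inter> {S. csubspace S \<and> \<Union>F \<subseteq> S}"

definition alpha_s :: "('q::finite) op set \<Rightarrow> 'q vec set" where
  "alpha_s R = subspace_Sup (supp ` R)"

definition gamma_s :: "('q::finite) vec set \<Rightarrow> 'q op set" where
  "gamma_s P = {\<rho> \<in> pdo. supp \<rho> \<subseteq> P}"

text \<open>Well-structured abstract domain over the concrete domain Q = 2^D(H_V)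
  (subsets of pdo), with abstract complete lattice 'a.\<close>
definition well_structured ::
  "(('q::finite) op set \<Rightarrow> 'a::complete_lattice) \<Rightarrow> ('a \<Rightarrow> 'q op set) \<Rightarrow> bool" where
  "well_structured \<alpha> \<gamma> \<longleftrightarrow>
     (\<forall>a. \<gamma> a \<subseteq> pdo) \<and>
     (\<forall>c1 c2. c1 \<subseteq> c2 \<and> c2 \<subseteq> pdo \<longrightarrow> \<alpha> c1 \<le> \<alpha> c2) \<and>
     mono \<gamma> \<and>
     (\<forall>c a. c \<subseteq> pdo \<longrightarrow> (c \<subseteq> \<gamma> a \<longleftrightarrow> \<alpha> c \<le> a)) \<and>
     (\<forall>a. \<alpha> (\<gamma> a) = a) \<and>
     (\<forall>(I::nat set) (\<rho>::nat \<Rightarrow> 'q op) (x::nat \<Rightarrow> real).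
        finite I \<and> (\<forall>i\<in>I. \<rho> i \<in> pdo \<and> x i > 0) \<and>
        (\<lambda>a b. \<Sum>i\<in>I. complex_of_real (x i) * \<rho> i a b) \<in> pdo \<longrightarrow>
        \<alpha> {(\<lambda>a b. \<Sum>i\<in>I. complex_of_real (x i) * \<rho> i a b)} = (SUP i\<in>I. \<alpha> {\<rho> i}))"

end

theory Submission
  imports Defs
begin


definition qf :: "('q::finite) op \<Rightarrow> 'q vec \<Rightarrow> 'q vec \<Rightarrow> complex" where
  "qf A x y = inner_vec x (apply_op A y)"

lemma qf_alt: "qf A x y = (\<Sum>i\<in>UNIV. \<Sum>j\<in>UNIV. cnj (x i) * A i j * y j)"
  by (simp add: qf_def inner_vec_def apply_op_def sum_distrib_left mult.assoc)

definition ev :: "('q::finite) basis \<Rightarrow> 'q vec" where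
  "ev i = (\<lambda>k. if k = i then 1 else 0)"

lemma apply_ev: "apply_op A (ev j) = (\<lambda>i. A i j)"
proof -
  have "\<And>i k. A i k * (if k = j then 1 else 0) = (if k = j then A i k else 0)" by simp
  then show ?thesis by (simp add: apply_op_def ev_def)
qed

lemma inner_ev: "inner_vec (ev i) v = v i"
proof -
  have "\<And>k. cnj (if k = i then 1 else 0) * v k = (if k = i then v k else 0)" by simp
  then show ?thesis by (simp add: inner_vec_def ev_def)
qed

lemma qf_ev: "qf A (ev i) (ev j) = A i j"
  by (simp add: qf_def apply_ev inner_ev)

lemma qf_ev_right: "qf A x (ev j) = (\<Sum>i\<in>UNIV. cnj (x i) * A i j)"
  by (simp add: qf_def apply_ev inner_vec_def)

lemma qf_quad:
  "qf A (\<lambda>i. x i + d * y i) (\<lambda>i. x i + d * y i) =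
     qf A x x + d * qf A x y + cnj d * qf A y x + d * cnj d * qf A y y"
  by (simp add: qf_alt algebra_simps sum.distrib sum_distrib_left)

lemma qf_sum_op: "qf (\<lambda>a b. \<Sum>k\<in>I. f k a b) x y = (\<Sum>k\<in>I. qf (f k) x y)"
  by (simp add: qf_alt sum_distrib_left sum_distrib_right sum.swap[of _ I] mult.assoc)

lemma qf_scale_op: "qf (\<lambda>a b. c * A a b) x y = c * qf A x y"
  by (simp add: qf_alt sum_distrib_left algebra_simps)

lemma qf_diff_op: "qf (\<lambda>a b. A a b - B a b) x y = qf A x y - qf B x y"
  by (simp add: qf_alt algebra_simps sum_subtractf)

lemma qf_add_op: "qf (\<lambda>a b. A a b + B a b) x y = qf A x y + qf B x y"
  by (simp add: qf_alt algebra_simps sum.distrib)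

lemma qf_rank1: "qf (\<lambda>a b. v a * cnj (v b)) x y = (\<Sum>i\<in>UNIV. cnj (x i) * v i) * cnj (\<Sum>j\<in>UNIV. cnj (y j) * v j)"
  by (simp add: qf_alt sum_product mult_ac)

lemma pos_real: "positive_op A \<Longrightarrow> qf A x x = complex_of_real (Re (qf A x x))"
  unfolding positive_op_def qf_def by (metis Reals_cases Re_complex_of_real)

lemma pos_ge0: "positive_op A \<Longrightarrow> Re (qf A x x) \<ge> 0"
  unfolding positive_op_def qf_def by auto

lemma pos_herm:
  assumes "positive_op A" shows "qf A x y = cnj (qf A y x)"
proof -
  have r: "\<And>z. Im (qf A z z) = 0" using pos_real[OF assms] by (metis Im_complex_of_real)
  have e1: "qf A (\<lambda>i. x i + 1 * y i) (\<lambda>i. x i + 1 * y i) = qf A x x + qf A x y + qf A y x + qf A y y"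
    using qf_quad[of A x 1 y] by simp
  have e2: "qf A (\<lambda>i. x i + \<i> * y i) (\<lambda>i. x i + \<i> * y i) = qf A x x + \<i> * qf A x y - \<i> * qf A y x + qf A y y"
    using qf_quad[of A x "\<i>" y] by simp
  have "Im (qf A x y) + Im (qf A y x) = 0" using arg_cong[OF e1, of Im] r by simp
  moreover have "Re (qf A x y) - Re (qf A y x) = 0" using arg_cong[OF e2, of Im] r by simp
  ultimately show ?thesis by (simp add: complex_eq_iff)
qed

lemma pos_CS:
  assumes "positive_op A"
  shows "(cmod (qf A x y))\<^sup>2 \<le> Re (qf A x x) * Re (qf A y y)"
proof (cases "qf A x y = 0")
  case True then show ?thesis using pos_ge0[OF assms] by simp
next
  case False
  define z where "z = qf A x y"
  define a where "a = Re (qf A x x)"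
  define b where "b = Re (qf A y y)"
  define c where "c = cnj z / complex_of_real (cmod z)"
  have zn: "cmod z > 0" using False z_def by simp
  have zz: "cnj z * z = complex_of_real ((cmod z)\<^sup>2)"
    by (metis complex_norm_square mult.commute)
  have cz: "c * z = complex_of_real (cmod z)"
  proof -
    have "c * z = complex_of_real ((cmod z)\<^sup>2) / complex_of_real (cmod z)"
      unfolding c_def zz[symmetric] by simp
    also have "\<dots> = complex_of_real (cmod z)" using zn by (simp add: power2_eq_square)
    finally show ?thesis .
  qed
  have ccz: "cnj c * cnj z = complex_of_real (cmod z)"
    using arg_cong[OF cz, of cnj] by simp
  have cc: "c * cnj c = 1"
  proof -
    have "c * cnj c = (cnj z * z) / (complex_of_real (cmod z) * complex_of_real (cmod z))"
      unfolding c_def by (simp add: mult.commute)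
    also have "\<dots> = 1" unfolding zz using zn by (simp add: power2_eq_square)
    finally show ?thesis .
  qed
  have key: "\<And>t::real. 0 \<le> a + 2 * t * cmod z + t\<^sup>2 * b"
  proof -
    fix t :: real
    define d where "d = complex_of_real t * c"
    have "qf A (\<lambda>i. x i + d * y i) (\<lambda>i. x i + d * y i) =
       qf A x x + d * z + cnj d * cnj z + d * cnj d * qf A y y"
      using qf_quad[of A x d y] pos_herm[OF assms, of y x] z_def by simp
    also have "\<dots> = qf A x x + complex_of_real (2 * t * cmod z) + complex_of_real (t\<^sup>2) * qf A y y"
    proof -
      have h1: "d * z = complex_of_real t * (c * z)" by (simp add: d_def mult.assoc)
      have h2: "cnj d * cnj z = complex_of_real t * (cnj c * cnj z)" by (simp add: d_def mult.assoc)
      have h3: "d * cnj d = complex_of_real (t\<^sup>2) * (c * cnj c)"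
        by (simp add: d_def power2_eq_square mult_ac)
      show ?thesis unfolding h1 h2 h3 cz ccz cc by simp
    qed
    finally have "Re (qf A (\<lambda>i. x i + d * y i) (\<lambda>i. x i + d * y i)) = a + 2 * t * cmod z + t\<^sup>2 * b"
      unfolding a_def b_def by simp
    then show "0 \<le> a + 2 * t * cmod z + t\<^sup>2 * b" using pos_ge0[OF assms] by metis
  qed
  have b0: "b \<ge> 0" using pos_ge0[OF assms] b_def by simp
  show ?thesis
  proof (cases "b = 0")
    case True
    have "0 \<le> a + 2 * (-(a+1)/(2*cmod z)) * cmod z" using key[of "-(a+1)/(2*cmod z)"] True by simp
    then have False using zn by (simp add: field_simps)
    then show ?thesis ..
  next
    case False
    with b0 have bp: "b > 0" by simp
    have "0 \<le> a + 2 * (-cmod z / b) * cmod z + (-cmod z / b)\<^sup>2 * b" using key by blast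
    then have "0 \<le> a - (cmod z)\<^sup>2 / b" using bp by (simp add: power2_eq_square field_simps)
    then have "(cmod z)\<^sup>2 \<le> a * b" using bp by (simp add: field_simps)
    then show ?thesis unfolding z_def a_def b_def .
  qed
qed


lemma sum_sq_card:
  fixes f :: "'b \<Rightarrow> real"
  shows "(\<Sum>i\<in>I. f i)\<^sup>2 \<le> real (card I) * (\<Sum>i\<in>I. (f i)\<^sup>2)"
proof -
  have "(\<Sum>i\<in>I. f i)\<^sup>2 = (\<Sum>i\<in>I. \<Sum>j\<in>I. f i * f j)"
    by (simp add: power2_eq_square sum_product)
  also have "\<dots> \<le> (\<Sum>i\<in>I. \<Sum>j\<in>I. ((f i)\<^sup>2 + (f j)\<^sup>2) / 2)"
  proof (intro sum_mono)
    fix i j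
    have "0 \<le> (f i - f j)\<^sup>2" by simp
    then show "f i * f j \<le> ((f i)\<^sup>2 + (f j)\<^sup>2) / 2"
      by (simp add: power2_eq_square algebra_simps)
  qed
  also have "\<dots> = (\<Sum>i\<in>I. \<Sum>j\<in>I. (f i)\<^sup>2 / 2) + (\<Sum>i\<in>I. \<Sum>j\<in>I. (f j)\<^sup>2 / 2)"
    by (simp add: add_divide_distrib sum.distrib)
  also have "(\<Sum>i\<in>I. \<Sum>j\<in>I. (f j)\<^sup>2 / 2) = (\<Sum>i\<in>I. \<Sum>j\<in>I. (f i)\<^sup>2 / 2)"
    by (rule sum.swap)
  also have "(\<Sum>i\<in>I. \<Sum>j\<in>I. (f i)\<^sup>2 / 2) = real (card I) * (\<Sum>i\<in>I. (f i)\<^sup>2) / 2"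
    by (simp add: sum_distrib_left sum_divide_distrib mult.commute)
  finally show ?thesis by simp
qed

lemma pos_iff: "positive_op A \<longleftrightarrow> (\<forall>x. qf A x x \<in> \<real> \<and> Re (qf A x x) \<ge> 0)"
  by (simp add: positive_op_def qf_def)

lemma trace_qf: "trace_op A = (\<Sum>i\<in>UNIV. qf A (ev i) (ev i))"
  by (simp add: trace_op_def qf_ev)

lemma pos_trace: "positive_op A \<Longrightarrow> Re (trace_op A) \<ge> 0"
  by (simp add: trace_qf sum_nonneg pos_ge0)

lemma apply_diff_op: "apply_op (\<lambda>a b. A a b - B a b) w = (\<lambda>i. apply_op A w i - apply_op B w i)"
  by (simp add: apply_op_def algebra_simps sum_subtractf)

lemma apply_rank1: "apply_op (\<lambda>a b. c * (v a * cnj (v b))) w = (\<lambda>i. c * v i * (\<Sum>l\<in>UNIV. cnj (v l) * w l))"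
  by (simp add: apply_op_def sum_distrib_left mult_ac)

lemma apply_lin: "apply_op A (\<lambda>i. w i - s * u i) = (\<lambda>i. apply_op A w i - s * apply_op A u i)"
  by (simp add: apply_op_def algebra_simps sum_subtractf sum_distrib_left)

lemma apply_scale: "apply_op A (\<lambda>i. s * u i) = (\<lambda>i. s * apply_op A u i)"
  by (simp add: apply_op_def algebra_simps sum_distrib_left)

lemma cmod_sq: "w * cnj w = complex_of_real ((cmod w)\<^sup>2)"
  by (metis complex_norm_square)

lemma decomp:
  fixes A :: "('q::finite) op"
  assumes "positive_op A"
  shows "\<exists>(n::nat) v. A = (\<lambda>a b. \<Sum>k<n. v k a * cnj (v k b)) \<and> (\<forall>k<n. v k \<in> range (apply_op A))"
  using assms
proof (induction "card {j. A j j \<noteq> 0}" arbitrary: A rule: less_induct)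
  case less
  note posA = less.prems
  show ?case
  proof (cases "{j. A j j \<noteq> 0} = {}")
    case True
    have A0: "A = (\<lambda>a b. 0)"
    proof (intro ext)
      fix i j
      have "(cmod (qf A (ev i) (ev j)))\<^sup>2 \<le> Re (qf A (ev i) (ev i)) * Re (qf A (ev j) (ev j))"
        by (rule pos_CS[OF posA])
      with True show "A i j = 0" by (simp add: qf_ev)
    qed
    show ?thesis
      apply (rule exI[of _ "0::nat"])
      apply (rule exI[of _ "\<lambda>(_::nat) (_::'q basis). 0::complex"])
      by (simp add: A0)
  next
    case False
    then obtain j where j: "A j j \<noteq> 0" by auto
    define c where "c = Re (A j j)"
    have Ajj: "A j j = complex_of_real c"
      using pos_real[OF posA, of "ev j"] by (simp add: qf_ev c_def)
    have c0: "c \<ge> 0"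
      using pos_ge0[OF posA, of "ev j"] by (simp add: qf_ev c_def)
    have "c \<noteq> 0" using j Ajj by auto
    with c0 have cpos: "c > 0" by linarith
    define v where "v = (\<lambda>i. A i j)"
    define A' where "A' = (\<lambda>a b. A a b - complex_of_real (1/c) * (v a * cnj (v b)))"
    have qv: "qf (\<lambda>a b. v a * cnj (v b)) x x = complex_of_real ((cmod (qf A x (ev j)))\<^sup>2)" for x
    proof -
      have "qf (\<lambda>a b. v a * cnj (v b)) x x = qf A x (ev j) * cnj (qf A x (ev j))"
        unfolding qf_rank1 qf_ev_right v_def by (rule refl)
      then show ?thesis by (simp only: cmod_sq)
    qed
    have qA': "qf A' x x = qf A x x - complex_of_real ((cmod (qf A x (ev j)))\<^sup>2 / c)" for x
      unfolding A'_def
      using qf_diff_op[of A "\<lambda>a b. complex_of_real (1/c) * (v a * cnj (v b))" x x]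
            qf_scale_op[of "complex_of_real (1/c)" "\<lambda>a b. v a * cnj (v b)" x x] qv[of x]
      by simp
    have posA': "positive_op A'"
      unfolding pos_iff
    proof
      fix x
      have cs: "(cmod (qf A x (ev j)))\<^sup>2 \<le> Re (qf A x x) * c"
        using pos_CS[OF posA, of x "ev j"] by (simp add: qf_ev c_def)
      have "qf A x x \<in> \<real>" using posA by (simp add: pos_iff)
      then have "qf A' x x \<in> \<real>" unfolding qA' by simp
      moreover have "Re (qf A' x x) \<ge> 0" unfolding qA' using cs cpos
        by (simp add: field_simps)
      ultimately show "qf A' x x \<in> \<real> \<and> 0 \<le> Re (qf A' x x)" by simp
    qed
    have diag: "A' k k = A k k - complex_of_real ((cmod (A k j))\<^sup>2 / c)" for k
      using qA'[of "ev k"] by (simp add: qf_ev)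
    have sub: "{k. A' k k \<noteq> 0} \<subseteq> {k. A k k \<noteq> 0} - {j}"
    proof
      fix k assume k: "k \<in> {k. A' k k \<noteq> 0}"
      have "k \<noteq> j"
      proof
        assume "k = j"
        then have "A' k k = complex_of_real c - complex_of_real (c\<^sup>2 / c)"
          using diag[of j] Ajj by simp
        then have "A' k k = 0" using cpos by (simp add: power2_eq_square)
        with k show False by simp
      qed
      moreover have "A k k \<noteq> 0"
      proof
        assume z: "A k k = 0"
        have "(cmod (A k j))\<^sup>2 \<le> Re (A k k) * Re (A j j)"
          using pos_CS[OF posA, of "ev k" "ev j"] by (simp add: qf_ev)
        with z have "(cmod (A k j))\<^sup>2 = 0"
          by (metis mult_eq_0_iff order_antisym_conv zero_complex.simps(1) zero_le_power2)
        then have "A' k k = 0" using diag[of k] z by simp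
        with k show False by simp
      qed
      ultimately show "k \<in> {k. A k k \<noteq> 0} - {j}" by simp
    qed
    have "card {k. A' k k \<noteq> 0} < card {k. A k k \<noteq> 0}"
    proof -
      have "{k. A' k k \<noteq> 0} \<subset> {k. A k k \<noteq> 0}" using sub j by blast
      then show ?thesis by (rule psubset_card_mono[OF finite])
    qed
    from less.hyps[OF this posA'] obtain n :: nat and v' where
      A'eq: "A' = (\<lambda>a b. \<Sum>k<n. v' k a * cnj (v' k b))" and
      v'r: "\<forall>k<n. v' k \<in> range (apply_op A')" by blast
    have rng: "range (apply_op A') \<subseteq> range (apply_op A)"
    proof
      fix y assume "y \<in> range (apply_op A')"
      then obtain w where y: "y = apply_op A' w" by auto
      define s where "s = complex_of_real (1/c) * (\<Sum>l\<in>UNIV. cnj (v l) * w l)"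
      have "y = apply_op A (\<lambda>i. w i - s * ev j i)"
        unfolding y A'_def apply_diff_op apply_rank1 apply_lin apply_ev
        by (simp add: s_def v_def mult_ac)
      then show "y \<in> range (apply_op A)" by auto
    qed
    define r where "r = complex_of_real (1 / sqrt c)"
    define u where "u = (\<lambda>i. r * v i)"
    have ur: "u \<in> range (apply_op A)"
    proof -
      have "u = apply_op A (\<lambda>i. r * ev j i)" unfolding apply_scale apply_ev u_def v_def ..
      then show ?thesis by auto
    qed
    have rr: "r * cnj r = complex_of_real (1/c)"
      unfolding r_def using cpos
      by (simp flip: of_real_mult)
    have Aeq: "A a b = A' a b + u a * cnj (u b)" for a b
    proof -
      have "u a * cnj (u b) = (r * cnj r) * (v a * cnj (v b))" by (simp add: u_def mult_ac)
      then show ?thesis unfolding A'_def rr by simp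
    qed
    define v'' where "v'' = v'(n := u)"
    show ?thesis
    proof (intro exI[of _ "Suc n"] exI[of _ v''] conjI allI impI)
      show "A = (\<lambda>a b. \<Sum>k<Suc n. v'' k a * cnj (v'' k b))"
      proof (intro ext)
        fix a b
        have "(\<Sum>k<n. v'' k a * cnj (v'' k b)) = (\<Sum>k<n. v' k a * cnj (v' k b))"
          by (intro sum.cong) (auto simp: v''_def)
        then show "A a b = (\<Sum>k<Suc n. v'' k a * cnj (v'' k b))"
          using Aeq[of a b] A'eq by (simp add: v''_def)
      qed
    next
      fix k assume "k < Suc n"
      then show "v'' k \<in> range (apply_op A)"
        using v'r rng ur by (auto simp: v''_def less_Suc_eq)
    qed
  qed
qed



lemma apply_add: "apply_op A (\<lambda>j. a j + b j) = (\<lambda>i. apply_op A a i + apply_op A b i)"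
  by (simp add: apply_op_def algebra_simps sum.distrib)

lemma apply_zero: "apply_op A (\<lambda>j. 0) = (\<lambda>i. 0)"
  by (simp add: apply_op_def)

definition Lspan :: "('q::finite) op set \<Rightarrow> 'q vec set" where
  "Lspan R = {x. \<exists>F w. finite F \<and> F \<subseteq> R \<and> x = (\<lambda>i. \<Sum>\<sigma>\<in>F. apply_op \<sigma> (w \<sigma>) i)}"

lemma Lspan_csub: "csubspace (Lspan R)"
  unfolding csubspace_def
proof (intro conjI ballI allI)
  show "(\<lambda>i. 0) \<in> Lspan R"
    unfolding Lspan_def by (rule CollectI, rule exI[of _ "{}"]) simp
next
  fix u v assume u: "u \<in> Lspan R" and v: "v \<in> Lspan R"
  obtain F w where F: "finite F" "F \<subseteq> R" and ue: "u = (\<lambda>i. \<Sum>\<sigma>\<in>F. apply_op \<sigma> (w \<sigma>) i)"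
    using u unfolding Lspan_def by blast
  obtain G w' where G: "finite G" "G \<subseteq> R" and ve: "v = (\<lambda>i. \<Sum>\<sigma>\<in>G. apply_op \<sigma> (w' \<sigma>) i)"
    using v unfolding Lspan_def by blast
  define w'' where "w'' = (\<lambda>\<sigma> j. (if \<sigma> \<in> F then w \<sigma> j else 0) + (if \<sigma> \<in> G then w' \<sigma> j else 0))"
  have ap: "apply_op \<sigma> (w'' \<sigma>) i = (if \<sigma> \<in> F then apply_op \<sigma> (w \<sigma>) i else 0) + (if \<sigma> \<in> G then apply_op \<sigma> (w' \<sigma>) i else 0)" for \<sigma> i
    by (cases "\<sigma> \<in> F"; cases "\<sigma> \<in> G") (simp_all add: w''_def apply_add apply_zero)
  have "(\<lambda>i. u i + v i) = (\<lambda>i. \<Sum>\<sigma>\<in>F \<union> G. apply_op \<sigma> (w'' \<sigma>) i)"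
  proof
    fix i
    have "(\<Sum>\<sigma>\<in>F \<union> G. apply_op \<sigma> (w'' \<sigma>) i) =
      (\<Sum>\<sigma>\<in>F \<union> G. if \<sigma> \<in> F then apply_op \<sigma> (w \<sigma>) i else 0) + (\<Sum>\<sigma>\<in>F \<union> G. if \<sigma> \<in> G then apply_op \<sigma> (w' \<sigma>) i else 0)"
      unfolding ap by (rule sum.distrib)
    also have "\<dots> = (\<Sum>\<sigma>\<in>F. apply_op \<sigma> (w \<sigma>) i) + (\<Sum>\<sigma>\<in>G. apply_op \<sigma> (w' \<sigma>) i)"
    proof -
      have fin: "finite (F \<union> G)" using F G by simp
      have h1: "(\<Sum>\<sigma>\<in>F \<union> G. if \<sigma> \<in> F then apply_op \<sigma> (w \<sigma>) i else 0) = (\<Sum>\<sigma>\<in>(F \<union> G) \<inter> F. apply_op \<sigma> (w \<sigma>) i)"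
        by (rule sum.inter_restrict[OF fin, symmetric])
      have h2: "(\<Sum>\<sigma>\<in>F \<union> G. if \<sigma> \<in> G then apply_op \<sigma> (w' \<sigma>) i else 0) = (\<Sum>\<sigma>\<in>(F \<union> G) \<inter> G. apply_op \<sigma> (w' \<sigma>) i)"
        by (rule sum.inter_restrict[OF fin, symmetric])
      have h3: "(F \<union> G) \<inter> F = F" "(F \<union> G) \<inter> G = G" by blast+
      show ?thesis unfolding h1 h2 h3 ..
    qed
    finally show "u i + v i = (\<Sum>\<sigma>\<in>F \<union> G. apply_op \<sigma> (w'' \<sigma>) i)" by (simp add: ue ve)
  qed
  then show "(\<lambda>i. u i + v i) \<in> Lspan R" unfolding Lspan_def
    by (intro CollectI exI[of _ "F \<union> G"] exI[of _ w'']) (use F G in simp)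
next
  fix c :: complex and v assume v: "v \<in> Lspan R"
  obtain F w where F: "finite F" "F \<subseteq> R" and ve: "v = (\<lambda>i. \<Sum>\<sigma>\<in>F. apply_op \<sigma> (w \<sigma>) i)"
    using v unfolding Lspan_def by blast
  have "(\<lambda>i. c * v i) = (\<lambda>i. \<Sum>\<sigma>\<in>F. apply_op \<sigma> ((\<lambda>\<sigma> j. c * w \<sigma> j) \<sigma>) i)"
    by (simp add: ve apply_scale sum_distrib_left)
  then show "(\<lambda>i. c * v i) \<in> Lspan R" unfolding Lspan_def
    by (intro CollectI exI[of _ F] exI[of _ "\<lambda>\<sigma> j. c * w \<sigma> j"]) (use F in simp)
qed

lemma supp_Lspan: "\<Union> (supp ` R) \<subseteq> Lspan R"
proof
  fix x assume "x \<in> \<Union> (supp ` R)"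
  then obtain \<sigma> u where s: "\<sigma> \<in> R" and x: "x = apply_op \<sigma> u" by (auto simp: supp_def)
  have "x = (\<lambda>i. \<Sum>\<tau>\<in>{\<sigma>}. apply_op \<tau> ((\<lambda>_. u) \<tau>) i)" by (simp add: x)
  then show "x \<in> Lspan R" unfolding Lspan_def
    by (intro CollectI exI[of _ "{\<sigma>}"] exI[of _ "\<lambda>_. u"]) (use s in simp)
qed

lemma alpha_s_Lspan: "alpha_s R \<subseteq> Lspan R"
  unfolding alpha_s_def subspace_Sup_def
  by (rule Inter_lower) (simp add: Lspan_csub supp_Lspan)

lemma csub_zero: "csubspace S \<Longrightarrow> (\<lambda>i. 0) \<in> S"
  unfolding csubspace_def by (erule conjunct1)
lemma csub_add: "csubspace S \<Longrightarrow> u \<in> S \<Longrightarrow> v \<in> S \<Longrightarrow> (\<lambda>i. u i + v i) \<in> S"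
  unfolding csubspace_def by blast
lemma csub_scale: "csubspace S \<Longrightarrow> v \<in> S \<Longrightarrow> (\<lambda>i. c * v i) \<in> S"
  unfolding csubspace_def by blast

lemma Inter_csub:
  assumes h: "\<And>S. S \<in> SS \<Longrightarrow> csubspace S" shows "csubspace (\<Inter> SS)"
  unfolding csubspace_def
proof (intro conjI ballI allI)
  show "(\<lambda>i. 0) \<in> \<Inter> SS"
  proof (rule InterI)
    fix S assume "S \<in> SS" then show "(\<lambda>i. 0) \<in> S" by (rule csub_zero[OF h])
  qed
next
  fix u v assume u: "u \<in> \<Inter> SS" and v: "v \<in> \<Inter> SS"
  show "(\<lambda>i. u i + v i) \<in> \<Inter> SS"
  proof (rule InterI)
    fix S assume S: "S \<in> SS"
    show "(\<lambda>i. u i + v i) \<in> S" by (rule csub_add[OF h[OF S] InterD[OF u S] InterD[OF v S]])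
  qed
next
  fix c :: complex and v assume v: "v \<in> \<Inter> SS"
  show "(\<lambda>i. c * v i) \<in> \<Inter> SS"
  proof (rule InterI)
    fix S assume S: "S \<in> SS"
    show "(\<lambda>i. c * v i) \<in> S" by (rule csub_scale[OF h[OF S] InterD[OF v S]])
  qed
qed

lemma alpha_s_csub: "csubspace (alpha_s R)"
  unfolding alpha_s_def subspace_Sup_def by (rule Inter_csub) simp

lemma alpha_s_sub: "csubspace S \<Longrightarrow> \<Union> (supp ` R) \<subseteq> S \<Longrightarrow> alpha_s R \<subseteq> S"
  unfolding alpha_s_def subspace_Sup_def by (rule Inter_lower) simp

lemma supp_alpha_s: "\<rho> \<in> R \<Longrightarrow> supp \<rho> \<subseteq> alpha_s R"
  unfolding alpha_s_def subspace_Sup_def by (rule Inter_greatest) auto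

lemma inner_sum: "inner_vec y (\<lambda>i. \<Sum>\<sigma>\<in>F. apply_op \<sigma> (w \<sigma>) i) = (\<Sum>\<sigma>\<in>F. qf \<sigma> y (w \<sigma>))"
  by (simp add: inner_vec_def qf_def sum_distrib_left sum.swap[of _ F])

lemma vec_bound:
  assumes "finite F" "\<forall>\<sigma>\<in>F. positive_op \<sigma>"
  shows "\<exists>C\<ge>0. \<forall>y. (cmod (inner_vec y (\<lambda>i. \<Sum>\<sigma>\<in>F. apply_op \<sigma> (w \<sigma>) i)))\<^sup>2
                 \<le> C * (\<Sum>\<sigma>\<in>F. Re (qf \<sigma> y y))"
proof -
  define M where "M = (\<Sum>\<sigma>\<in>F. Re (qf \<sigma> (w \<sigma>) (w \<sigma>)))"
  have M0: "M \<ge> 0" unfolding M_def using assms(2) by (intro sum_nonneg pos_ge0) blast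
  have Mle: "Re (qf \<sigma> (w \<sigma>) (w \<sigma>)) \<le> M" if "\<sigma> \<in> F" for \<sigma>
    unfolding M_def using assms pos_ge0 that by (intro member_le_sum) auto
  show ?thesis
  proof (intro exI[of _ "real (card F) * M"] conjI allI)
    show "0 \<le> real (card F) * M" using M0 by simp
    fix y
    have "(cmod (inner_vec y (\<lambda>i. \<Sum>\<sigma>\<in>F. apply_op \<sigma> (w \<sigma>) i)))\<^sup>2
        = (cmod (\<Sum>\<sigma>\<in>F. qf \<sigma> y (w \<sigma>)))\<^sup>2" by (simp add: inner_sum)
    also have "\<dots> \<le> (\<Sum>\<sigma>\<in>F. cmod (qf \<sigma> y (w \<sigma>)))\<^sup>2"
      by (intro power_mono norm_sum) simp
    also have "\<dots> \<le> real (card F) * (\<Sum>\<sigma>\<in>F. (cmod (qf \<sigma> y (w \<sigma>)))\<^sup>2)"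
      by (rule sum_sq_card)
    also have "\<dots> \<le> real (card F) * (\<Sum>\<sigma>\<in>F. M * Re (qf \<sigma> y y))"
    proof (intro mult_left_mono sum_mono)
      fix \<sigma> assume s: "\<sigma> \<in> F"
      have "(cmod (qf \<sigma> y (w \<sigma>)))\<^sup>2 \<le> Re (qf \<sigma> y y) * Re (qf \<sigma> (w \<sigma>) (w \<sigma>))"
        using pos_CS assms(2) s by blast
      also have "\<dots> \<le> Re (qf \<sigma> y y) * M"
        using Mle[OF s] pos_ge0 assms(2) s by (intro mult_left_mono) auto
      finally show "(cmod (qf \<sigma> y (w \<sigma>)))\<^sup>2 \<le> M * Re (qf \<sigma> y y)" by (simp add: mult.commute)
    qed simp
    also have "\<dots> = real (card F) * M * (\<Sum>\<sigma>\<in>F. Re (qf \<sigma> y y))"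
      by (simp add: sum_distrib_left mult.assoc)
    finally show "(cmod (inner_vec y (\<lambda>i. \<Sum>\<sigma>\<in>F. apply_op \<sigma> (w \<sigma>) i)))\<^sup>2
                 \<le> real (card F) * M * (\<Sum>\<sigma>\<in>F. Re (qf \<sigma> y y))" .
  qed
qed

lemma rank1_Re: "Re (qf (\<lambda>a b. v a * cnj (v b)) y y) = (cmod (inner_vec y v))\<^sup>2"
proof -
  have "qf (\<lambda>a b. v a * cnj (v b)) y y = inner_vec y v * cnj (inner_vec y v)"
    unfolding qf_rank1 inner_vec_def by (rule refl)
  then show ?thesis by (simp only: cmod_sq Re_complex_of_real)
qed

lemma trace_scale: "trace_op (\<lambda>a b. c * A a b) = c * trace_op A"
  by (simp add: trace_op_def sum_distrib_left)
lemma trace_diff: "trace_op (\<lambda>a b. A a b - B a b) = trace_op A - trace_op B"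
  by (simp add: trace_op_def sum_subtractf)
lemma trace_sum: "trace_op (\<lambda>a b. \<Sum>k\<in>I. f k a b) = (\<Sum>k\<in>I. trace_op (f k))"
  by (simp add: trace_op_def sum.swap[of _ I])

lemma pdo_iff: "\<rho> \<in> pdo \<longleftrightarrow> positive_op \<rho> \<and> Re (trace_op \<rho>) \<le> 1"
  by (simp add: pdo_def)



lemma ws_gal: "well_structured \<alpha> \<gamma> \<Longrightarrow> c \<subseteq> pdo \<Longrightarrow> (c \<subseteq> \<gamma> a \<longleftrightarrow> \<alpha> c \<le> a)"
  unfolding well_structured_def by blast

lemma ws_mono: "well_structured \<alpha> \<gamma> \<Longrightarrow> c1 \<subseteq> c2 \<Longrightarrow> c2 \<subseteq> pdo \<Longrightarrow> \<alpha> c1 \<le> \<alpha> c2"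
  unfolding well_structured_def by blast

lemma ws_sum:
  assumes "well_structured \<alpha> \<gamma>" "finite (I::nat set)" "\<forall>i\<in>I. \<rho> i \<in> pdo \<and> x i > 0"
    "(\<lambda>a b. \<Sum>i\<in>I. complex_of_real (x i) * \<rho> i a b) \<in> pdo"
  shows "\<alpha> {(\<lambda>a b. \<Sum>i\<in>I. complex_of_real (x i) * \<rho> i a b)} = (SUP i\<in>I. \<alpha> {\<rho> i})"
proof -
  have "\<forall>(I::nat set) \<rho> (x::nat \<Rightarrow> real).
        finite I \<and> (\<forall>i\<in>I. \<rho> i \<in> pdo \<and> x i > 0) \<and>
        (\<lambda>a b. \<Sum>i\<in>I. complex_of_real (x i) * \<rho> i a b) \<in> pdo \<longrightarrow>
        \<alpha> {(\<lambda>a b. \<Sum>i\<in>I. complex_of_real (x i) * \<rho> i a b)} = (SUP i\<in>I. \<alpha> {\<rho> i})"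
    using assms(1) unfolding well_structured_def by (elim conjE)
  then show ?thesis using assms(2-4) by blast
qed

lemma compare:
  fixes \<alpha> :: "('q::finite) op set \<Rightarrow> 'a::complete_lattice"
  assumes ws: "well_structured \<alpha> \<gamma>" and P: "P \<in> pdo" and B: "B \<in> pdo" and C: "C > 0"
    and le: "\<And>y. Re (qf P y y) \<le> C * Re (qf B y y)"
  shows "\<alpha> {P} \<le> \<alpha> {B}"
proof -
  define e where "e = 1 / (C + 1)"
  have e0: "e > 0" using C by (simp add: e_def)
  have e1: "e \<le> 1" using C by (simp add: e_def)
  have eC: "e * C \<le> 1" using C by (simp add: e_def)
  define EP where "EP = (\<lambda>a b. complex_of_real e * P a b)"
  define Y where "Y = (\<lambda>a b. B a b - EP a b)"
  have posP: "positive_op P" and trP: "Re (trace_op P) \<le> 1" using P by (simp_all add: pdo_iff)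
  have posB: "positive_op B" and trB: "Re (trace_op B) \<le> 1" using B by (simp_all add: pdo_iff)
  have qEP: "qf EP y y = complex_of_real e * qf P y y" for y unfolding EP_def by (rule qf_scale_op)
  have qY: "qf Y y y = qf B y y - qf EP y y" for y unfolding Y_def by (rule qf_diff_op)
  have RP: "qf P y y \<in> \<real>" "Re (qf P y y) \<ge> 0" for y using posP by (simp_all add: pos_iff)
  have RB: "qf B y y \<in> \<real>" "Re (qf B y y) \<ge> 0" for y using posB by (simp_all add: pos_iff)
  have tP0: "Re (trace_op P) \<ge> 0" by (rule pos_trace[OF posP])
  have EPp: "EP \<in> pdo"
    unfolding pdo_iff pos_iff
  proof (intro conjI allI)
    fix y
    show "qf EP y y \<in> \<real>" unfolding qEP using RP(1) by simp
    show "0 \<le> Re (qf EP y y)" unfolding qEP using RP(2) e0 by simp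
  next
    have "Re (trace_op EP) = e * Re (trace_op P)" unfolding EP_def trace_scale by simp
    also have "\<dots> \<le> Re (trace_op P)" using mult_left_le_one_le[of "Re (trace_op P)" e] e0 e1 tP0 by simp
    finally show "Re (trace_op EP) \<le> 1" using trP by simp
  qed
  have Yp: "Y \<in> pdo"
    unfolding pdo_iff pos_iff
  proof (intro conjI allI)
    fix y
    show "qf Y y y \<in> \<real>" unfolding qY qEP using RP(1) RB(1) by simp
    have "e * Re (qf P y y) \<le> e * (C * Re (qf B y y))" using le[of y] e0 by simp
    also have "\<dots> = (e * C) * Re (qf B y y)" by simp
    also have "\<dots> \<le> Re (qf B y y)" using mult_left_le_one_le[of "Re (qf B y y)" "e * C"] eC RB(2) e0 C by simp
    finally show "0 \<le> Re (qf Y y y)" unfolding qY qEP by simp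
  next
    have "Re (trace_op Y) = Re (trace_op B) - e * Re (trace_op P)"
      unfolding Y_def trace_diff EP_def trace_scale by simp
    moreover have "e * Re (trace_op P) \<ge> 0" using tP0 e0 by simp
    ultimately show "Re (trace_op Y) \<le> 1" using trB by linarith
  qed
  define rr :: "nat \<Rightarrow> 'q op" where "rr = (\<lambda>i. if i = 0 then EP else Y)"
  define xx :: "nat \<Rightarrow> real" where "xx = (\<lambda>_. 1)"
  have h1: "\<alpha> {(\<lambda>a b. \<Sum>i\<in>{0,1}. complex_of_real (xx i) * rr i a b)} = (SUP i\<in>{0,1}. \<alpha> {rr i})"
  proof (rule ws_sum[OF ws])
    show "(\<lambda>a b. \<Sum>i\<in>{0,1}. complex_of_real (xx i) * rr i a b) \<in> pdo"
      using B by (simp add: xx_def rr_def Y_def)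
  qed (use EPp Yp in \<open>auto simp: rr_def xx_def\<close>)
  have Beq: "(\<lambda>a b. \<Sum>i\<in>{0::nat,1}. complex_of_real (xx i) * rr i a b) = B"
    by (simp add: xx_def rr_def Y_def)
  have "\<alpha> {EP} \<le> \<alpha> {B}"
  proof -
    have "\<alpha> {rr 0} \<le> (SUP i\<in>{0,1}. \<alpha> {rr i})" by (rule SUP_upper) simp
    moreover have "rr 0 = EP" by (simp add: rr_def)
    ultimately show ?thesis using h1 unfolding Beq by simp
  qed
  define ss :: "nat \<Rightarrow> 'q op" where "ss = (\<lambda>_. P)"
  define ee :: "nat \<Rightarrow> real" where "ee = (\<lambda>_. e)"
  have h2: "\<alpha> {(\<lambda>a b. \<Sum>i\<in>{0}. complex_of_real (ee i) * ss i a b)} = (SUP i\<in>{0}. \<alpha> {ss i})"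
  proof (rule ws_sum[OF ws])
    show "(\<lambda>a b. \<Sum>i\<in>{0}. complex_of_real (ee i) * ss i a b) \<in> pdo"
      using EPp by (simp add: ee_def ss_def EP_def)
  qed (use P e0 in \<open>auto simp: ss_def ee_def\<close>)
  have "\<alpha> {EP} = \<alpha> {P}"
    using h2 by (simp add: ee_def ss_def EP_def)
  then show ?thesis using \<open>\<alpha> {EP} \<le> \<alpha> {B}\<close> by simp
qed



lemma key:
  fixes \<alpha> :: "('q::finite) op set \<Rightarrow> 'a::complete_lattice"
  assumes ws: "well_structured \<alpha> \<gamma>" and R: "R \<subseteq> pdo" and rho: "\<rho> \<in> pdo"
    and sp: "supp \<rho> \<subseteq> alpha_s R"
  shows "\<alpha> {\<rho>} \<le> \<alpha> R"
proof -
  have posr: "positive_op \<rho>" using rho by (simp add: pdo_iff)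
  obtain n :: nat and v where rhoe: "\<rho> = (\<lambda>a b. \<Sum>k<n. v k a * cnj (v k b))"
    and vr: "\<forall>k<n. v k \<in> range (apply_op \<rho>)"
    using decomp[OF posr] by blast
  have vL: "v k \<in> Lspan R" if "k < n" for k
    using vr that sp alpha_s_Lspan unfolding supp_def by blast
  have "\<forall>k\<in>{..<n}. \<exists>F w. finite F \<and> F \<subseteq> R \<and> v k = (\<lambda>i. \<Sum>\<sigma>\<in>F. apply_op \<sigma> (w \<sigma>) i)"
    using vL unfolding Lspan_def by blast
  from bchoice[OF this] obtain FF where
    "\<forall>k\<in>{..<n}. \<exists>w. finite (FF k) \<and> FF k \<subseteq> R \<and> v k = (\<lambda>i. \<Sum>\<sigma>\<in>FF k. apply_op \<sigma> (w \<sigma>) i)"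
    by (elim exE)
  from bchoice[OF this] obtain ww where FFw:
    "\<forall>k\<in>{..<n}. finite (FF k) \<and> FF k \<subseteq> R \<and> v k = (\<lambda>i. \<Sum>\<sigma>\<in>FF k. apply_op \<sigma> (ww k \<sigma>) i)"
    by (elim exE)
  have "\<forall>k\<in>{..<n}. \<exists>C\<ge>0. \<forall>y. (cmod (inner_vec y (v k)))\<^sup>2 \<le> C * (\<Sum>\<sigma>\<in>FF k. Re (qf \<sigma> y y))"
  proof
    fix k assume k: "k \<in> {..<n}"
    have fk: "finite (FF k)" and sk: "FF k \<subseteq> R" and vk: "v k = (\<lambda>i. \<Sum>\<sigma>\<in>FF k. apply_op \<sigma> (ww k \<sigma>) i)"
      using FFw k by auto
    have "\<forall>\<sigma>\<in>FF k. positive_op \<sigma>" using sk R by (auto simp: pdo_iff)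
    from vec_bound[OF fk this, of "ww k"] show "\<exists>C\<ge>0. \<forall>y. (cmod (inner_vec y (v k)))\<^sup>2 \<le> C * (\<Sum>\<sigma>\<in>FF k. Re (qf \<sigma> y y))"
      unfolding vk .
  qed
  from bchoice[OF this] obtain CC where CC:
    "\<forall>k\<in>{..<n}. CC k \<ge> 0 \<and> (\<forall>y. (cmod (inner_vec y (v k)))\<^sup>2 \<le> CC k * (\<Sum>\<sigma>\<in>FF k. Re (qf \<sigma> y y)))"
    by (elim exE)
  define F where "F = (\<Union>k\<in>{..<n}. FF k)"
  have finF: "finite F" unfolding F_def using FFw by auto
  have FR: "F \<subseteq> R" unfolding F_def using FFw by auto
  have posF: "positive_op \<sigma>" if "\<sigma> \<in> F" for \<sigma> using FR R that by (auto simp: pdo_iff)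
  define Q where "Q y = (\<Sum>\<sigma>\<in>F. Re (qf \<sigma> y y))" for y
  have Q0: "Q y \<ge> 0" for y unfolding Q_def by (rule sum_nonneg) (simp add: posF pos_ge0)
  have Qk: "(\<Sum>\<sigma>\<in>FF k. Re (qf \<sigma> y y)) \<le> Q y" if k: "k < n" for k y
    unfolding Q_def
  proof (rule sum_mono2[OF finF])
    show "FF k \<subseteq> F" unfolding F_def using k by auto
    show "\<And>b. b \<in> F - FF k \<Longrightarrow> 0 \<le> Re (qf b y y)" using posF pos_ge0 by auto
  qed
  define C0 where "C0 = (\<Sum>k<n. CC k) + 1"
  have "(\<Sum>k<n. CC k) \<ge> 0" by (rule sum_nonneg) (use CC in blast)
  then have C0p: "C0 > 0" unfolding C0_def by linarith
  have rhoQ: "Re (qf \<rho> y y) \<le> C0 * Q y" for y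
  proof -
    have "Re (qf \<rho> y y) = (\<Sum>k<n. Re (qf (\<lambda>a b. v k a * cnj (v k b)) y y))"
      unfolding rhoe qf_sum_op by simp
    also have "\<dots> = (\<Sum>k<n. (cmod (inner_vec y (v k)))\<^sup>2)" by (simp add: rank1_Re)
    also have "\<dots> \<le> (\<Sum>k<n. CC k * Q y)"
    proof (rule sum_mono)
      fix k assume k: "k \<in> {..<n}"
      have "(cmod (inner_vec y (v k)))\<^sup>2 \<le> CC k * (\<Sum>\<sigma>\<in>FF k. Re (qf \<sigma> y y))" using CC k by blast
      also have "\<dots> \<le> CC k * Q y" using CC k Qk[of k y] by (intro mult_left_mono) auto
      finally show "(cmod (inner_vec y (v k)))\<^sup>2 \<le> CC k * Q y" .
    qed
    also have "\<dots> = (\<Sum>k<n. CC k) * Q y" by (simp add: sum_distrib_right)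
    also have "\<dots> \<le> C0 * Q y" unfolding C0_def using Q0[of y] by (simp add: distrib_right)
    finally show ?thesis .
  qed
  obtain h where h: "bij_betw h {0..<card F} F" using ex_bij_betw_nat_finite[OF finF] by blast
  define m where "m = card F"
  have hF: "h i \<in> F" if "i \<in> {0..<m}" for i using h that unfolding m_def by (auto dest: bij_betwE)
  define xx :: "nat \<Rightarrow> real" where "xx = (\<lambda>_. 1 / (real m + 1))"
  define B where "B = (\<lambda>a b. \<Sum>i\<in>{0..<m}. complex_of_real (xx i) * h i a b)"
  have qB: "qf B y y = (\<Sum>i\<in>{0..<m}. complex_of_real (xx i) * qf (h i) y y)" for y
    unfolding B_def qf_sum_op qf_scale_op ..
  have QB: "Q y = (\<Sum>i\<in>{0..<m}. Re (qf (h i) y y))" for y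
    unfolding Q_def m_def using sum.reindex_bij_betw[OF h, of "\<lambda>\<sigma>. Re (qf \<sigma> y y)"] by simp
  have ReB: "Re (qf B y y) = Q y / (real m + 1)" for y
    unfolding qB QB by (simp add: xx_def sum_divide_distrib)
  have Bp: "B \<in> pdo"
    unfolding pdo_iff pos_iff
  proof (intro conjI allI)
    fix y
    have "\<And>i. i \<in> {0..<m} \<Longrightarrow> qf (h i) y y \<in> \<real>" using hF posF by (auto simp: pos_iff)
    then show "qf B y y \<in> \<real>" unfolding qB by (auto intro!: sum_in_Reals)
    show "0 \<le> Re (qf B y y)" unfolding ReB using Q0[of y] by simp
  next
    have "Re (trace_op B) = (\<Sum>i\<in>{0..<m}. xx i * Re (trace_op (h i)))"
      unfolding B_def trace_sum trace_scale by simp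
    also have "\<dots> \<le> (\<Sum>i\<in>{0..<m}. xx i * 1)"
    proof (rule sum_mono)
      fix i assume "i \<in> {0..<m}"
      then have "h i \<in> pdo" using hF FR R by auto
      then show "xx i * Re (trace_op (h i)) \<le> xx i * 1"
        by (intro mult_left_mono) (auto simp: pdo_iff xx_def)
    qed
    also have "\<dots> = real m / (real m + 1)" by (simp add: xx_def)
    also have "\<dots> \<le> 1" by simp
    finally show "Re (trace_op B) \<le> 1" .
  qed
  have "\<alpha> {\<rho>} \<le> \<alpha> {B}"
  proof (rule compare[OF ws rho Bp])
    show "0 < C0 * (real m + 1)" using C0p by simp
    fix y
    have "Re (qf \<rho> y y) \<le> C0 * Q y" by (rule rhoQ)
    also have "\<dots> = C0 * (real m + 1) * Re (qf B y y)" unfolding ReB by simp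
    finally show "Re (qf \<rho> y y) \<le> C0 * (real m + 1) * Re (qf B y y)" .
  qed
  also have "\<alpha> {B} = (SUP i\<in>{0..<m}. \<alpha> {h i})"
    unfolding B_def
  proof (rule ws_sum[OF ws])
    show "finite {0..<m}" by simp
    show "\<forall>i\<in>{0..<m}. h i \<in> pdo \<and> 0 < xx i"
    proof
      fix i assume "i \<in> {0..<m}"
      then have "h i \<in> F" by (rule hF)
      then have "h i \<in> pdo" using FR R by blast
      then show "h i \<in> pdo \<and> 0 < xx i" by (simp add: xx_def)
    qed
    show "(\<lambda>a b. \<Sum>i\<in>{0..<m}. complex_of_real (xx i) * h i a b) \<in> pdo" using Bp unfolding B_def .
  qed
  also have "\<dots> \<le> \<alpha> R"
  proof (rule SUP_least)
    fix i assume "i \<in> {0..<m}"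
    then have "{h i} \<subseteq> R" using hF FR by auto
    then show "\<alpha> {h i} \<le> \<alpha> R" using ws_mono[OF ws _ R] by blast
  qed
  finally show ?thesis .
qed

lemma le_from:
  fixes \<alpha> :: "('q::finite) op set \<Rightarrow> 'a::complete_lattice"
  assumes ws: "well_structured \<alpha> \<gamma>" and R1: "R1 \<subseteq> pdo" and R2: "R2 \<subseteq> pdo"
    and sp: "\<forall>\<rho>\<in>R1. supp \<rho> \<subseteq> alpha_s R2"
  shows "\<alpha> R1 \<le> \<alpha> R2"
proof -
  have "R1 \<subseteq> \<gamma> (\<alpha> R2)"
  proof
    fix \<rho> assume r: "\<rho> \<in> R1"
    have "\<alpha> {\<rho>} \<le> \<alpha> R2" using key[OF ws R2] r R1 sp by blast
    then have "{\<rho>} \<subseteq> \<gamma> (\<alpha> R2)" using ws_gal[OF ws, of "{\<rho>}"] r R1 by blast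
    then show "\<rho> \<in> \<gamma> (\<alpha> R2)" by simp
  qed
  then show ?thesis using ws_gal[OF ws R1] by blast
qed

theorem mainTheorem2:
  fixes \<alpha> :: "('q::finite) op set \<Rightarrow> 'a::complete_lattice"
    and \<gamma> :: "'a \<Rightarrow> 'q op set"
  assumes "well_structured \<alpha> \<gamma>"
  shows "(\<forall>R1 R2. R1 \<subseteq> pdo \<and> R2 \<subseteq> pdo \<and> alpha_s R1 = alpha_s R2 \<longrightarrow> \<alpha> R1 = \<alpha> R2)
       \<and> (\<forall>R. R \<subseteq> pdo \<longrightarrow> \<alpha> R = \<alpha> (gamma_s (alpha_s R)))"
proof (intro conjI allI impI)
  fix R1 R2 :: "'q op set"
  assume h: "R1 \<subseteq> pdo \<and> R2 \<subseteq> pdo \<and> alpha_s R1 = alpha_s R2"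
  then have R1: "R1 \<subseteq> pdo" and R2: "R2 \<subseteq> pdo" and eq: "alpha_s R1 = alpha_s R2" by auto
  have "\<alpha> R1 \<le> \<alpha> R2"
    using le_from[OF assms R1 R2] supp_alpha_s eq by blast
  moreover have "\<alpha> R2 \<le> \<alpha> R1"
    using le_from[OF assms R2 R1] supp_alpha_s eq by blast
  ultimately show "\<alpha> R1 = \<alpha> R2" by (rule antisym)
next
  fix R :: "'q op set"
  assume R: "R \<subseteq> pdo"
  have G: "gamma_s (alpha_s R) \<subseteq> pdo" unfolding gamma_s_def by auto
  have RG: "R \<subseteq> gamma_s (alpha_s R)" unfolding gamma_s_def using R supp_alpha_s by auto
  have "\<alpha> R \<le> \<alpha> (gamma_s (alpha_s R))"
    using le_from[OF assms R G] RG supp_alpha_s by blast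
  moreover have "\<alpha> (gamma_s (alpha_s R)) \<le> \<alpha> R"
    using le_from[OF assms G R] unfolding gamma_s_def by blast
  ultimately show "\<alpha> R = \<alpha> (gamma_s (alpha_s R))" by (rule antisym)
qed


end
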